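(* Under the standing assumptions, for $0\le i\le d$ the following holds on $V$: $$E^*_0\,\tau_i(A)\,E^*_0=\frac{\zeta_i\,E^*_0}{(\theta^*_0-\theta^*_1)(\theta^*_0-\theta^*_2)\cdots(\theta^*_0-\theta^*_i)}.$$
   Context: Let $\mathbb F$ be an algebraically closed field, $d\ge0$, and $q,a,b,c,a^*,b^*,c^*\in\mathbb F$ with $q,b,c,b^*,c^*$ nonzero and $q^2\ne\pm1$. Put $\theta_i=a+bq^{2i-d}+cq^{d-2i}$ and $\theta^*_i=a^*+b^*q^{2i-d}+c^*q^{d-2i}$ ($0\le i\le d$), and assume $\theta_0,\dots,\theta_d$ are mutually distinct and $\theta^*_0,\dots,\theta^*_d$ are mutually distinct (this forces $q^{2i}\ne1$ for $1\le i\le d$). For an indeterminate $\lambda$, $\tau_i=(\lambda-\theta_0)(\lambda-\theta_1)\cdots(\lambda-\theta_{i-1})$ ($\tau_0=1$). $U_q(\widehat{\mathfrak{sl}}_2)$ is the associative unital $\mathbb F$-algebra with generators $e_i^{\pm},K_i^{\pm1}$ ($i\in\{0,1\}$) and relations $K_iK_i^{-1}=K_i^{-1}K_i=1$, $K_0K_1=K_1K_0$, $K_ie_i^{\pm}K_i^{-1}=q^{\pm2}e_i^{\pm}$, $K_ie_j^{\pm}K_i^{-1}=q^{\mp2}e_j^{\pm}$ ($i\ne j$), $e_i^+e_i^--e_i^-e_i^+=(K_i-K_i^{-1})/(q-q^{-1})$, $e_0^{\pm}e_1^{\mp}=e_1^{\mp}e_0^{\pm}$, and the $q$-Serre relations $(e_i^\pm)^3e_j^\pm-[3]_q(e_i^\pm)^2e_j^\pm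 e_i^\pm+[3]_qe_i^\pm e_j^\pm(e_i^\pm)^2-e_j^\pm(e_i^\pm)^3=0$ ($i\ne j$), where $[3]_q=q^2+1+q^{-2}$. Tensor products of modules are formed via $e_i^+(v\otimes w)=e_i^+v\otimes K_iw+v\otimes e_i^+w$, $e_i^-(v\otimes w)=e_i^-v\otimes w+K_i^{-1}v\otimes e_i^-w$, $K_i(v\otimes w)=K_iv\otimes K_iw$. For nonzero $\alpha\in\mathbb F$, $V(\alpha)$ is the module with basis $x,y$ and $K_1x=qx$, $K_1y=q^{-1}y$, $e_1^-x=y$, $e_1^-y=0$, $e_1^+x=0$, $e_1^+y=x$, $K_0x=q^{-1}x$, $K_0y=qy$, $e_0^-x=0$, $e_0^-y=q\alpha^{-1}x$, $e_0^+x=q^{-1}\alpha y$, $e_0^+y=0$. $V=V(\alpha_1)\otimes\cdots\otimes V(\alpha_d)$ with nonzero $\alpha_i\in\mathbb F$ (for $d=0$, the trivial module where each $e_i^\pm$ acts as $0$ and each $K_i^{\pm1}$ as $1$). $U_0$ is the $1$-dimensional span of $x\otimes\cdots\otimes x$. Fix $u,v,u^*,v^*\in\mathbb F$ with $uv^*=-bb^*q^{-1}(q-q^{-1})^2$, $vu^*=-cc^*q^{-1}(q-q^{-1})^2$; set $R=ue_0^++ve_1^-K_1$, $L=u^*e_1^++v^*e_0^-K_0$, $A=a1+bK_0+cK_1+R$, $A^*=a^*1+b^*K_0+c^*K_1+L$, and $E^*_0=\prod_{1\le j\le d}(A^*-\theta^*_j1)/(\theta^*_0-\theta^*_j)$ in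 $U_q(\widehat{\mathfrak{sl}}_2)$. For $0\le i\le d$, $\zeta_i$ denotes the scalar by which $L^iR^i$ acts on $U_0$ (the split sequence of $V$). *)

theory Defs
  imports "HOL-Computational_Algebra.Polynomial"
begin

text \<open>Basis of V: bool lists of length d; True stands for x, False for y
  (position k of the list is tensor factor k+1). An operator is given by its
  matrix M s t = coefficient of basis vector s in the image of basis vector t.\<close>

type_synonym 'a op = "bool list \<Rightarrow> bool list \<Rightarrow> 'a"
type_synonym 'a site = "bool \<Rightarrow> bool \<Rightarrow> 'a"

definition basisV :: "nat \<Rightarrow> bool list set" where
  "basisV d = {s. length s = d}"

definition op_mul :: "nat \<Rightarrow> 'a::comm_ring_1 op \<Rightarrow> 'a op \<Rightarrow> 'a op" where
  "op_mul d M N = (\<lambda>s t. \<Sum>u\<in>basisV d. M s u * N u t)"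

definition op_id :: "'a::comm_ring_1 op" where
  "op_id = (\<lambda>s t. if s = t then 1 else 0)"

definition op_add :: "'a::comm_ring_1 op \<Rightarrow> 'a op \<Rightarrow> 'a op" where
  "op_add M N = (\<lambda>s t. M s t + N s t)"

definition op_smult :: "'a::comm_ring_1 \<Rightarrow> 'a op \<Rightarrow> 'a op" where
  "op_smult c M = (\<lambda>s t. c * M s t)"

fun op_pow :: "nat \<Rightarrow> 'a::comm_ring_1 op \<Rightarrow> nat \<Rightarrow> 'a op" where
  "op_pow d M 0 = op_id"
| "op_pow d M (Suc n) = op_mul d M (op_pow d M n)"

definition op_prod :: "nat \<Rightarrow> 'a::comm_ring_1 op list \<Rightarrow> 'a op" where
  "op_prod d Ms = foldr (op_mul d) Ms op_id"

definition op_eq :: "nat \<Rightarrow> 'a op \<Rightarrow> 'a op \<Rightarrow> bool" where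
  "op_eq d M N = (\<forall>s\<in>basisV d. \<forall>t\<in>basisV d. M s t = N s t)"

definition tens :: "nat \<Rightarrow> (nat \<Rightarrow> 'a::comm_ring_1 site) \<Rightarrow> 'a op" where
  "tens d f = (\<lambda>s t. \<Prod>k<d. f k (s ! k) (t ! k))"

definition site_id :: "'a::field site" where
  "site_id = (\<lambda>r c. if r = c then 1 else 0)"
definition site_K1 :: "'a::field \<Rightarrow> 'a site" where
  "site_K1 q = (\<lambda>r c. if r = c then (if c then q else inverse q) else 0)"
definition site_K1inv :: "'a::field \<Rightarrow> 'a site" where
  "site_K1inv q = (\<lambda>r c. if r = c then (if c then inverse q else q) else 0)"
definition site_K0 :: "'a::field \<Rightarrow> 'a site" where
  "site_K0 q = (\<lambda>r c. if r = c then (if c then inverse q else q) else 0)"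
definition site_K0inv :: "'a::field \<Rightarrow> 'a site" where
  "site_K0inv q = (\<lambda>r c. if r = c then (if c then q else inverse q) else 0)"
text \<open>e1^- x = y, e1^- y = 0\<close>
definition site_e1m :: "'a::field site" where
  "site_e1m = (\<lambda>r c. if c \<and> \<not> r then 1 else 0)"
text \<open>e1^+ y = x, e1^+ x = 0\<close>
definition site_e1p :: "'a::field site" where
  "site_e1p = (\<lambda>r c. if \<not> c \<and> r then 1 else 0)"
text \<open>e0^- y = q alpha^-1 x, e0^- x = 0\<close>
definition site_e0m :: "'a::field \<Rightarrow> 'a \<Rightarrow> 'a site" where
  "site_e0m q \<alpha> = (\<lambda>r c. if \<not> c \<and> r then q * inverse \<alpha> else 0)"
text \<open>e0^+ x = q^-1 alpha y, e0^+ y = 0\<close>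
definition site_e0p :: "'a::field \<Rightarrow> 'a \<Rightarrow> 'a site" where
  "site_e0p q \<alpha> = (\<lambda>r c. if c \<and> \<not> r then inverse q * \<alpha> else 0)"

text \<open>alpha k (k < d) is the parameter of tensor factor k+1.
  e^+(v w) = e^+ v (K w) + v (e^+ w);  e^-(v w) = (e^- v) w + (K^-1 v)(e^- w).\<close>

definition V_K0 :: "nat \<Rightarrow> 'a::field \<Rightarrow> 'a op" where
  "V_K0 d q = tens d (\<lambda>j. site_K0 q)"
definition V_K1 :: "nat \<Rightarrow> 'a::field \<Rightarrow> 'a op" where
  "V_K1 d q = tens d (\<lambda>j. site_K1 q)"

definition V_e0p :: "nat \<Rightarrow> 'a::field \<Rightarrow> (nat \<Rightarrow> 'a) \<Rightarrow> 'a op" where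
  "V_e0p d q \<alpha> = (\<lambda>s t. \<Sum>k<d. tens d (\<lambda>j. if j < k then site_id
       else if j = k then site_e0p q (\<alpha> k) else site_K0 q) s t)"
definition V_e1p :: "nat \<Rightarrow> 'a::field \<Rightarrow> 'a op" where
  "V_e1p d q = (\<lambda>s t. \<Sum>k<d. tens d (\<lambda>j. if j < k then site_id
       else if j = k then site_e1p else site_K1 q) s t)"
definition V_e0m :: "nat \<Rightarrow> 'a::field \<Rightarrow> (nat \<Rightarrow> 'a) \<Rightarrow> 'a op" where
  "V_e0m d q \<alpha> = (\<lambda>s t. \<Sum>k<d. tens d (\<lambda>j. if j < k then site_K0inv q
       else if j = k then site_e0m q (\<alpha> k) else site_id) s t)"
definition V_e1m :: "nat \<Rightarrow> 'a::field \<Rightarrow> 'a op" where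
  "V_e1m d q = (\<lambda>s t. \<Sum>k<d. tens d (\<lambda>j. if j < k then site_K1inv q
       else if j = k then site_e1m else site_id) s t)"

definition R_op :: "nat \<Rightarrow> 'a::field \<Rightarrow> (nat \<Rightarrow> 'a) \<Rightarrow> 'a \<Rightarrow> 'a \<Rightarrow> 'a op" where
  "R_op d q \<alpha> u v = op_add (op_smult u (V_e0p d q \<alpha>)) (op_smult v (op_mul d (V_e1m d q) (V_K1 d q)))"

definition L_op :: "nat \<Rightarrow> 'a::field \<Rightarrow> (nat \<Rightarrow> 'a) \<Rightarrow> 'a \<Rightarrow> 'a \<Rightarrow> 'a op" where
  "L_op d q \<alpha> us vs = op_add (op_smult us (V_e1p d q)) (op_smult vs (op_mul d (V_e0m d q \<alpha>) (V_K0 d q)))"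

definition A_op :: "nat \<Rightarrow> 'a::field \<Rightarrow> (nat \<Rightarrow> 'a) \<Rightarrow> 'a \<Rightarrow> 'a \<Rightarrow> 'a \<Rightarrow> 'a \<Rightarrow> 'a \<Rightarrow> 'a op" where
  "A_op d q \<alpha> a b c u v = op_add (op_smult a op_id) (op_add (op_smult b (V_K0 d q))
      (op_add (op_smult c (V_K1 d q)) (R_op d q \<alpha> u v)))"

definition As_op :: "nat \<Rightarrow> 'a::field \<Rightarrow> (nat \<Rightarrow> 'a) \<Rightarrow> 'a \<Rightarrow> 'a \<Rightarrow> 'a \<Rightarrow> 'a \<Rightarrow> 'a \<Rightarrow> 'a op" where
  "As_op d q \<alpha> as bs cs us vs = op_add (op_smult as op_id) (op_add (op_smult bs (V_K0 d q))
      (op_add (op_smult cs (V_K1 d q)) (L_op d q \<alpha> us vs)))"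

definition theta :: "'a::field \<Rightarrow> 'a \<Rightarrow> 'a \<Rightarrow> 'a \<Rightarrow> nat \<Rightarrow> nat \<Rightarrow> 'a" where
  "theta a b c q d i = a + b * q powi (2 * int i - int d) + c * q powi (int d - 2 * int i)"

definition E0s_op :: "nat \<Rightarrow> 'a::field \<Rightarrow> (nat \<Rightarrow> 'a) \<Rightarrow> 'a \<Rightarrow> 'a \<Rightarrow> 'a \<Rightarrow> 'a \<Rightarrow> 'a \<Rightarrow> 'a op" where
  "E0s_op d q \<alpha> as bs cs us vs = op_prod d (map (\<lambda>j.
      op_smult (inverse (theta as bs cs q d 0 - theta as bs cs q d j))
        (op_add (As_op d q \<alpha> as bs cs us vs) (op_smult (- theta as bs cs q d j) op_id))) [1..<d+1])"

definition tau_op :: "nat \<Rightarrow> (nat \<Rightarrow> 'a::field) \<Rightarrow> 'a op \<Rightarrow> nat \<Rightarrow> 'a op" where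
  "tau_op d th M i = op_prod d (map (\<lambda>h. op_add M (op_smult (- th h) op_id)) [0..<i])"

definition x0 :: "nat \<Rightarrow> bool list" where
  "x0 d = replicate d True"

definition zeta :: "nat \<Rightarrow> 'a::field \<Rightarrow> (nat \<Rightarrow> 'a) \<Rightarrow> 'a \<Rightarrow> 'a \<Rightarrow> 'a \<Rightarrow> 'a \<Rightarrow> nat \<Rightarrow> 'a" where
  "zeta d q \<alpha> u v us vs i = (THE z. \<forall>s\<in>basisV d.
      op_mul d (op_pow d (L_op d q \<alpha> us vs) i) (op_pow d (R_op d q \<alpha> u v) i) s (x0 d)
        = (if s = x0 d then z else 0))"

end

theory Submission
  imports Defs
begin


lemma finite_basisV[simp]: "finite (basisV d)"
proof -
  have "basisV d = {xs. set xs \<subseteq> (UNIV::bool set) \<and> length xs = d}" by (auto simp: basisV_def)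
  thus ?thesis using finite_lists_length_eq[of "UNIV::bool set" d] by simp
qed

definition restr :: "nat \<Rightarrow> (bool list \<Rightarrow> 'a::comm_ring_1) \<Rightarrow> bool list \<Rightarrow> 'a" where
  "restr d w = (\<lambda>s. if s \<in> basisV d then w s else 0)"
definition appV :: "nat \<Rightarrow> 'a::comm_ring_1 op \<Rightarrow> (bool list \<Rightarrow> 'a) \<Rightarrow> bool list \<Rightarrow> 'a" where
  "appV d M w = (\<lambda>s. if s \<in> basisV d then (\<Sum>t\<in>basisV d. M s t * w t) else 0)"

lemma appV_mul: "appV d (op_mul d M N) w = appV d M (appV d N w)"
proof (rule ext)
  fix s
  have "(\<Sum>t\<in>basisV d. (\<Sum>u\<in>basisV d. M s u * N u t) * w t)
      = (\<Sum>u\<in>basisV d. M s u * (\<Sum>t\<in>basisV d. N u t * w t))"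
  proof -
    have "(\<Sum>t\<in>basisV d. (\<Sum>u\<in>basisV d. M s u * N u t) * w t)
       = (\<Sum>t\<in>basisV d. \<Sum>u\<in>basisV d. M s u * N u t * w t)" by (simp add: sum_distrib_right)
    also have "\<dots> = (\<Sum>u\<in>basisV d. \<Sum>t\<in>basisV d. M s u * N u t * w t)" by (rule sum.swap)
    also have "\<dots> = (\<Sum>u\<in>basisV d. M s u * (\<Sum>t\<in>basisV d. N u t * w t))"
      by (simp add: sum_distrib_left mult.assoc)
    finally show ?thesis .
  qed
  also have "\<dots> = (\<Sum>u\<in>basisV d. M s u * (if u \<in> basisV d then (\<Sum>t\<in>basisV d. N u t * w t) else 0))"
    by (rule sum.cong) auto
  finally show "appV d (op_mul d M N) w s = appV d M (appV d N w) s"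
    by (simp add: appV_def op_mul_def)
qed

lemma appV_id: "appV d op_id w = restr d w"
proof (rule ext)
  fix s
  have "(\<Sum>t\<in>basisV d. op_id s t * w t) = (\<Sum>t\<in>basisV d. if s = t then w t else 0)"
    by (rule sum.cong) (simp_all add: op_id_def)
  also have "\<dots> = (if s \<in> basisV d then w s else 0)"
    by (rule sum.delta') simp
  finally have e: "(\<Sum>t\<in>basisV d. op_id s t * w t) = (if s \<in> basisV d then w s else 0)" .
  show "appV d op_id w s = restr d w s"
    unfolding appV_def restr_def e by simp
qed

lemma appV_add: "appV d (op_add M N) w = (\<lambda>s. appV d M w s + appV d N w s)"
  by (auto simp: appV_def op_add_def distrib_right sum.distrib)

lemma appV_smult: "appV d (op_smult c M) w = (\<lambda>s. c * appV d M w s)"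
  by (auto simp: appV_def op_smult_def sum_distrib_left mult.assoc)

lemma appV_restr[simp]: "appV d M (restr d w) = appV d M w"
  by (auto simp: appV_def restr_def intro!: sum.cong)

lemma restr_appV[simp]: "restr d (appV d M w) = appV d M w"
  by (auto simp: appV_def restr_def)

lemma restr_restr[simp]: "restr d (restr d w) = restr d w"
  by (auto simp: restr_def)

lemma appV_lin: "appV d M (\<lambda>s. c * (f s - th * g s)) = (\<lambda>s. c * (appV d M f s - th * appV d M g s))"
  by (auto simp: appV_def sum_distrib_left sum_subtractf algebra_simps)

lemma appV_scal: "appV d M (\<lambda>s. c * f s) = (\<lambda>s. c * appV d M f s)"
  by (auto simp: appV_def sum_distrib_left algebra_simps)

lemma restr_lin: "restr d (\<lambda>s. c * (appV d M f s - th * restr d g s)) = (\<lambda>s. c * (appV d M f s - th * restr d g s))"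
  by (auto simp: appV_def restr_def)

definition fac :: "nat \<Rightarrow> 'a::comm_ring_1 op \<Rightarrow> 'a \<Rightarrow> 'a \<Rightarrow> (bool list \<Rightarrow> 'a) \<Rightarrow> bool list \<Rightarrow> 'a" where
  "fac d M c th w = (\<lambda>s. c * (appV d M w s - th * restr d w s))"

lemma appV_fac: "appV d (op_smult c (op_add M (op_smult (-th) op_id))) = fac d M c th"
  by (rule ext) (simp add: appV_smult appV_add appV_id fac_def algebra_simps)

lemma appV_fac1: "appV d (op_add M (op_smult (-th) op_id)) = fac d M 1 th"
  by (rule ext) (simp add: appV_smult appV_add appV_id fac_def algebra_simps)

lemma fac_commute: "fac d M c th (fac d M c' th' w) = fac d M c' th' (fac d M c th w)"
  unfolding fac_def appV_lin restr_lin appV_restr by (rule ext) (simp add: algebra_simps)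

lemma fac_commute': "fac d M c th \<circ> fac d M c' th' = fac d M c' th' \<circ> fac d M c th"
  by (rule ext) (simp add: fac_commute)

lemma comp_append: "foldr (\<circ>) (xs @ ys) id = foldr (\<circ>) xs id \<circ> foldr (\<circ>) ys id"
  by (induction xs) auto

lemma comm_aux2: "f \<circ> g = g \<circ> f \<Longrightarrow> f \<circ> G = G \<circ> f \<Longrightarrow> f \<circ> (g \<circ> G) = (g \<circ> G) \<circ> f"
  by (simp add: fun_eq_iff)

lemma comm_one: "(\<forall>g\<in>set gs. f \<circ> g = g \<circ> f) \<Longrightarrow> f \<circ> foldr (\<circ>) gs id = foldr (\<circ>) gs id \<circ> f"
proof (induction gs)
  case Nil show ?case by simp
next
  case (Cons g gs)
  have A: "f \<circ> g = g \<circ> f" using Cons.prems by (meson list.set_intros(1))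
  have B: "f \<circ> foldr (\<circ>) gs id = foldr (\<circ>) gs id \<circ> f"
    using Cons.prems by (intro Cons.IH) (meson list.set_intros(2))
  have e: "foldr (\<circ>) (g # gs) id = g \<circ> foldr (\<circ>) gs id" by simp
  show ?case unfolding e by (rule comm_aux2[OF A B])
qed

lemma comm_aux: "f \<circ> G = G \<circ> f \<Longrightarrow> F \<circ> G = G \<circ> F \<Longrightarrow> (f \<circ> F) \<circ> G = G \<circ> (f \<circ> F)"
  by (simp add: fun_eq_iff)

lemma comm_list: "(\<forall>f\<in>set fs. \<forall>g\<in>set gs. f \<circ> g = g \<circ> f) \<Longrightarrow>
   foldr (\<circ>) fs id \<circ> foldr (\<circ>) gs id = foldr (\<circ>) gs id \<circ> foldr (\<circ>) fs id"
proof (induction fs)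
  case Nil then show ?case by simp
next
  case (Cons f fs)
  have A: "f \<circ> foldr (\<circ>) gs id = foldr (\<circ>) gs id \<circ> f"
    by (rule comm_one) (use Cons.prems in \<open>meson list.set_intros(1)\<close>)
  have P: "\<forall>f\<in>set fs. \<forall>g\<in>set gs. f \<circ> g = g \<circ> f"
    using Cons.prems by (meson list.set_intros(2))
  have B: "foldr (\<circ>) fs id \<circ> foldr (\<circ>) gs id = foldr (\<circ>) gs id \<circ> foldr (\<circ>) fs id"
    by (rule Cons.IH[OF P])
  have e: "foldr (\<circ>) (f # fs) id = f \<circ> foldr (\<circ>) fs id" by simp
  show ?case unfolding e by (rule comm_aux[OF A B])
qed

lemma appV_op_prod: "appV d (op_prod d Ms) w = foldr (\<circ>) (map (appV d) Ms) id (restr d w)"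
  by (induction Ms arbitrary: w) (auto simp: op_prod_def appV_id appV_mul)

lemma appV_op_pow: "appV d (op_pow d M n) w = (appV d M ^^ n) (restr d w)"
  by (induction n arbitrary: w) (auto simp: appV_id appV_mul)



definition nf :: "bool list \<Rightarrow> nat" where
  "nf s = card {k. k < length s \<and> \<not> s ! k}"

definition hom :: "nat \<Rightarrow> nat \<Rightarrow> (bool list \<Rightarrow> 'a::comm_ring_1) \<Rightarrow> bool" where
  "hom d m w = (\<forall>s. w s \<noteq> 0 \<longrightarrow> s \<in> basisV d \<and> nf s = m)"

definition ev :: "bool list \<Rightarrow> bool list \<Rightarrow> 'a::comm_ring_1" where
  "ev t = (\<lambda>s. if s = t then 1 else 0)"

lemma nf_le: "nf s \<le> length s"
proof -
  have "card {k. k < length s \<and> \<not> s ! k} \<le> card {..<length s}" by (rule card_mono) auto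
  thus ?thesis by (simp add: nf_def)
qed

lemma nf_upd_F: assumes "k < length t" "t ! k" shows "nf (t[k := False]) = Suc (nf t)"
proof -
  have "{j. j < length (t[k := False]) \<and> \<not> t[k := False] ! j} = insert k {j. j < length t \<and> \<not> t ! j}"
    using assms by (auto simp: nth_list_update)
  moreover have "k \<notin> {j. j < length t \<and> \<not> t ! j}" using assms by auto
  ultimately show ?thesis by (simp add: nf_def)
qed

lemma nf_upd_T: assumes "k < length t" "\<not> t ! k" shows "Suc (nf (t[k := True])) = nf t"
proof -
  have "{j. j < length t \<and> \<not> t ! j} = insert k {j. j < length (t[k := True]) \<and> \<not> t[k := True] ! j}"
    using assms by (auto simp: nth_list_update)
  moreover have "k \<notin> {j. j < length (t[k := True]) \<and> \<not> t[k := True] ! j}" using assms by auto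
  ultimately show ?thesis by (simp add: nf_def)
qed

lemma nf0: assumes "nf s = 0" shows "s = replicate (length s) True"
proof -
  have "{k. k < length s \<and> \<not> s ! k} = {}"
    using assms unfolding nf_def by (subst card_0_eq[symmetric]) auto
  thus ?thesis by (auto intro!: nth_equalityI)
qed

lemma x0_basis[simp]: "x0 d \<in> basisV d" by (simp add: x0_def basisV_def)
lemma nf_x0[simp]: "nf (x0 d) = 0" by (simp add: nf_def x0_def)

lemma hom_restr: "hom d m w \<Longrightarrow> restr d w = w"
  by (auto simp: hom_def restr_def fun_eq_iff)

lemma hom_ev: "t \<in> basisV d \<Longrightarrow> hom d (nf t) (ev t)"
  by (auto simp: hom_def ev_def)

lemma hom_scal: "hom d m w \<Longrightarrow> hom d m (\<lambda>s. c * w s)"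
  unfolding hom_def by (metis mult_zero_right)

lemma hom0: assumes "hom d 0 z" shows "z = (\<lambda>s. z (x0 d) * ev (x0 d) s)"
proof (rule ext)
  fix s show "z s = z (x0 d) * ev (x0 d) s"
  proof (cases "z s = 0")
    case False
    hence "s \<in> basisV d" "nf s = 0" using assms by (auto simp: hom_def)
    hence "s = x0 d" using nf0 by (auto simp: basisV_def x0_def)
    thus ?thesis by (simp add: ev_def)
  next
    case True
    moreover have "s = x0 d \<Longrightarrow> z s = 0 \<Longrightarrow> z (x0 d) = 0" by simp
    ultimately show ?thesis by (auto simp: ev_def)
  qed
qed

lemma tens_shift:
  assumes s: "s \<in> basisV d" and t: "t \<in> basisV d" and nz: "tens d f s t \<noteq> 0" and k: "k < d"
    and diag: "\<And>j r c. j < d \<Longrightarrow> j \<noteq> k \<Longrightarrow> f j r c \<noteq> 0 \<Longrightarrow> r = c"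
    and fk: "\<And>r c. f k r c \<noteq> 0 \<Longrightarrow> r = r0 \<and> c = c0"
  shows "s = t[k := r0] \<and> t ! k = c0"
proof -
  have all: "\<And>j. j < d \<Longrightarrow> f j (s ! j) (t ! j) \<noteq> 0"
    using nz unfolding tens_def by (metis finite_lessThan lessThan_iff prod_zero)
  have "s = t[k := r0]"
  proof (rule nth_equalityI)
    show "length s = length (t[k := r0])" using s t by (simp add: basisV_def)
    fix j assume "j < length s"
    hence j: "j < d" using s by (simp add: basisV_def)
    show "s ! j = t[k := r0] ! j"
    proof (cases "j = k")
      case True thus ?thesis using fk[OF all[OF k]] t k by (simp add: basisV_def)
    next
      case False thus ?thesis using diag[OF j False all[OF j]] by simp
    qed
  qed
  thus ?thesis using fk[OF all[OF k]] by simp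
qed

lemma tens_diag:
  assumes s: "s \<in> basisV d" and t: "t \<in> basisV d" and ne: "s \<noteq> t"
    and diag: "\<And>j r c. j < d \<Longrightarrow> f j r c \<noteq> 0 \<Longrightarrow> r = c"
  shows "tens d f s t = 0"
proof (rule ccontr)
  assume nz: "tens d f s t \<noteq> 0"
  have all: "\<And>j. j < d \<Longrightarrow> f j (s ! j) (t ! j) \<noteq> 0"
    using nz unfolding tens_def by (metis finite_lessThan lessThan_iff prod_zero)
  have "s = t"
  proof (rule nth_equalityI)
    show "length s = length t" using s t by (simp add: basisV_def)
    fix j assume "j < length s"
    hence j: "j < d" using s by (simp add: basisV_def)
    show "s ! j = t ! j" using diag[OF j all[OF j]] .
  qed
  thus False using ne by simp
qed



lemma prod_bool: "(\<Prod>k<length s. if s ! k then x else y) = x ^ (length s - nf s) * (y::'a::comm_ring_1) ^ nf s"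
proof -
  let ?A = "{k. k < length s \<and> \<not> s ! k}"
  have fin: "finite ?A" by auto
  have e1: "{..<length s} \<inter> {k. s ! k} = {..<length s} - ?A" by auto
  have e2: "{..<length s} \<inter> - {k. s ! k} = ?A" by auto
  have c1: "card ({..<length s} - ?A) = length s - nf s"
    by (subst card_Diff_subset) (auto simp: nf_def)
  show ?thesis
    by (simp add: prod.If_cases e1 e2 c1 nf_def)
qed

lemma powi_aux: assumes "(q::'a::field) \<noteq> 0" "n \<le> d"
  shows "q powi (2 * int n - int d) = q ^ n * inverse q ^ (d - n)"
    and "q powi (int d - 2 * int n) = q ^ (d - n) * inverse q ^ n"
proof -
  have a: "q powi (int k + - int j) = q ^ k * inverse q ^ j" for k j
  proof -
    have "q powi (int k + - int j) = q powi int k * q powi (- int j)"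
      by (rule power_int_add) (use assms in simp)
    thus ?thesis by (simp add: power_int_minus power_inverse)
  qed
  have "q powi (2 * int n - int d) = q powi (int n + - int (d - n))" using assms(2) by (simp add: of_nat_diff)
  thus "q powi (2 * int n - int d) = q ^ n * inverse q ^ (d - n)" using a by simp
  have "q powi (int d - 2 * int n) = q powi (int (d - n) + - int n)" using assms(2) by (simp add: of_nat_diff)
  thus "q powi (int d - 2 * int n) = q ^ (d - n) * inverse q ^ n" using a by simp
qed

lemma K0_entry: assumes "(q::'a::field) \<noteq> 0" "s \<in> basisV d" "t \<in> basisV d"
  shows "V_K0 d q s t = (if s = t then q powi (2 * int (nf s) - int d) else 0)"
proof (cases "s = t")
  case False thus ?thesis using assms unfolding V_K0_def
    by (auto intro!: tens_diag simp: site_K0_def split: if_splits)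
next
  case True
  have l: "length s = d" using assms by (simp add: basisV_def)
  have "V_K0 d q s s = (\<Prod>k<length s. if s ! k then inverse q else q)"
    unfolding V_K0_def tens_def site_K0_def l by simp
  also have "\<dots> = q powi (2 * int (nf s) - int d)"
    unfolding prod_bool using powi_aux[OF assms(1), of "nf s" d] nf_le[of s] l by (simp add: mult.commute)
  finally show ?thesis using True by simp
qed

lemma K1_entry: assumes "(q::'a::field) \<noteq> 0" "s \<in> basisV d" "t \<in> basisV d"
  shows "V_K1 d q s t = (if s = t then q powi (int d - 2 * int (nf s)) else 0)"
proof (cases "s = t")
  case False thus ?thesis using assms unfolding V_K1_def
    by (auto intro!: tens_diag simp: site_K1_def split: if_splits)
next
  case True
  have l: "length s = d" using assms by (simp add: basisV_def)
  have "V_K1 d q s s = (\<Prod>k<length s. if s ! k then q else inverse q)"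
    unfolding V_K1_def tens_def site_K1_def l by simp
  also have "\<dots> = q powi (int d - 2 * int (nf s))"
    unfolding prod_bool using powi_aux[OF assms(1), of "nf s" d] nf_le[of s] l by simp
  finally show ?thesis using True by simp
qed

lemma shift_F:
  assumes s: "s \<in> basisV d" and t: "t \<in> basisV d" and nz: "(\<Sum>k<d. tens d (g k) s t) \<noteq> 0"
    and diag: "\<And>k j r c. k < d \<Longrightarrow> j < d \<Longrightarrow> j \<noteq> k \<Longrightarrow> g k j r c \<noteq> 0 \<Longrightarrow> r = c"
    and gk: "\<And>k r c. k < d \<Longrightarrow> g k k r c \<noteq> 0 \<Longrightarrow> r = False \<and> c = True"
  shows "nf s = Suc (nf t)"
proof -
  obtain k where k: "k < d" "tens d (g k) s t \<noteq> 0"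
    using sum.not_neutral_contains_not_neutral[OF nz] by auto
  have D: "\<And>j r c. j < d \<Longrightarrow> j \<noteq> k \<Longrightarrow> g k j r c \<noteq> 0 \<Longrightarrow> r = c" using diag k(1) by blast
  have G: "\<And>r c. g k k r c \<noteq> 0 \<Longrightarrow> r = False \<and> c = True" using gk k(1) by blast
  have "s = t[k := False] \<and> t ! k = True"
    by (rule tens_shift[OF s t k(2) k(1) D G])
  thus ?thesis using nf_upd_F[of k t] k t by (auto simp: basisV_def)
qed

lemma shift_T:
  assumes s: "s \<in> basisV d" and t: "t \<in> basisV d" and nz: "(\<Sum>k<d. tens d (g k) s t) \<noteq> 0"
    and diag: "\<And>k j r c. k < d \<Longrightarrow> j < d \<Longrightarrow> j \<noteq> k \<Longrightarrow> g k j r c \<noteq> 0 \<Longrightarrow> r = c"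
    and gk: "\<And>k r c. k < d \<Longrightarrow> g k k r c \<noteq> 0 \<Longrightarrow> r = True \<and> c = False"
  shows "Suc (nf s) = nf t"
proof -
  obtain k where k: "k < d" "tens d (g k) s t \<noteq> 0"
    using sum.not_neutral_contains_not_neutral[OF nz] by auto
  have D: "\<And>j r c. j < d \<Longrightarrow> j \<noteq> k \<Longrightarrow> g k j r c \<noteq> 0 \<Longrightarrow> r = c" using diag k(1) by blast
  have G: "\<And>r c. g k k r c \<noteq> 0 \<Longrightarrow> r = True \<and> c = False" using gk k(1) by blast
  have "s = t[k := True] \<and> t ! k = False"
    by (rule tens_shift[OF s t k(2) k(1) D G])
  thus ?thesis using nf_upd_T[of k t] k t by (auto simp: basisV_def)
qed

lemma e0p_shift: "s \<in> basisV d \<Longrightarrow> t \<in> basisV d \<Longrightarrow> V_e0p d q \<alpha> s t \<noteq> 0 \<Longrightarrow> nf s = Suc (nf t)"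
  unfolding V_e0p_def
  by (erule (2) shift_F) (auto simp: site_id_def site_K0_def site_e0p_def split: if_splits)

lemma e1m_shift: "s \<in> basisV d \<Longrightarrow> t \<in> basisV d \<Longrightarrow> V_e1m d q s t \<noteq> 0 \<Longrightarrow> nf s = Suc (nf t)"
  unfolding V_e1m_def
  by (erule (2) shift_F) (auto simp: site_id_def site_K1inv_def site_e1m_def split: if_splits)

lemma e1p_shift: "s \<in> basisV d \<Longrightarrow> t \<in> basisV d \<Longrightarrow> V_e1p d q s t \<noteq> 0 \<Longrightarrow> Suc (nf s) = nf t"
  unfolding V_e1p_def
  by (erule (2) shift_T) (auto simp: site_id_def site_K1_def site_e1p_def split: if_splits)

lemma e0m_shift: "s \<in> basisV d \<Longrightarrow> t \<in> basisV d \<Longrightarrow> V_e0m d q \<alpha> s t \<noteq> 0 \<Longrightarrow> Suc (nf s) = nf t"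
  unfolding V_e0m_def
  by (erule (2) shift_T) (auto simp: site_id_def site_K0inv_def site_e0m_def split: if_splits)

lemma mul_diag_nz:
  assumes "s \<in> basisV d" "t \<in> basisV d" "op_mul d M D s t \<noteq> 0"
    and D: "\<And>u. u \<in> basisV d \<Longrightarrow> u \<noteq> t \<Longrightarrow> D u t = 0"
  shows "M s t \<noteq> 0"
proof -
  obtain u where u: "u \<in> basisV d" "M s u * D u t \<noteq> 0"
    using sum.not_neutral_contains_not_neutral[of "\<lambda>u. M s u * D u t"] assms(3)
    unfolding op_mul_def by auto
  hence "u = t" using D by fastforce
  thus ?thesis using u by (metis mult_zero_left)
qed

lemma R_shift: assumes "(q::'a::field) \<noteq> 0" "s \<in> basisV d" "t \<in> basisV d" "R_op d q \<alpha> u v s t \<noteq> 0"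
  shows "nf s = Suc (nf t)"
proof -
  have "V_e0p d q \<alpha> s t \<noteq> 0 \<or> op_mul d (V_e1m d q) (V_K1 d q) s t \<noteq> 0"
    using assms(4) by (auto simp: R_op_def op_add_def op_smult_def)
  moreover have "op_mul d (V_e1m d q) (V_K1 d q) s t \<noteq> 0 \<Longrightarrow> V_e1m d q s t \<noteq> 0"
    using assms(2,3) by (rule mul_diag_nz[where D="V_K1 d q"]) (use K1_entry[OF assms(1) _ assms(3)] in auto)
  ultimately show ?thesis using e0p_shift e1m_shift assms by blast
qed

lemma L_shift: assumes "(q::'a::field) \<noteq> 0" "s \<in> basisV d" "t \<in> basisV d" "L_op d q \<alpha> us vs s t \<noteq> 0"
  shows "Suc (nf s) = nf t"
proof -
  have "V_e1p d q s t \<noteq> 0 \<or> op_mul d (V_e0m d q \<alpha>) (V_K0 d q) s t \<noteq> 0"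
    using assms(4) by (auto simp: L_op_def op_add_def op_smult_def)
  moreover have "op_mul d (V_e0m d q \<alpha>) (V_K0 d q) s t \<noteq> 0 \<Longrightarrow> V_e0m d q \<alpha> s t \<noteq> 0"
    using assms(2,3) by (rule mul_diag_nz[where D="V_K0 d q"]) (use K0_entry[OF assms(1) _ assms(3)] in auto)
  ultimately show ?thesis using e1p_shift e0m_shift assms by blast
qed

lemma appV_nz: assumes nz: "appV d M w s \<noteq> 0"
  obtains t where "s \<in> basisV d" "t \<in> basisV d" "M s t \<noteq> 0" "w t \<noteq> 0"
proof -
  have s: "s \<in> basisV d"
  proof (rule ccontr)
    assume "s \<notin> basisV d"
    hence "appV d M w s = 0" by (simp add: appV_def)
    with nz show False by simp
  qed
  have "(\<Sum>t\<in>basisV d. M s t * w t) \<noteq> 0" using nz s by (simp add: appV_def)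
  then obtain t where t: "t \<in> basisV d" "M s t * w t \<noteq> 0"
    by (rule sum.not_neutral_contains_not_neutral)
  have "M s t \<noteq> 0" using t(2) by (cases "M s t = 0") simp_all
  moreover have "w t \<noteq> 0" using t(2) by (cases "w t = 0") simp_all
  ultimately show ?thesis using that s t(1) by blast
qed

lemma appV_up: assumes M: "\<And>s t. s \<in> basisV d \<Longrightarrow> t \<in> basisV d \<Longrightarrow> M s t \<noteq> 0 \<Longrightarrow> nf s = Suc (nf t)"
  and w: "hom d m w" shows "hom d (Suc m) (appV d M w)"
  unfolding hom_def
proof (intro allI impI)
  fix s assume nz: "appV d M w s \<noteq> 0"
  then obtain t where st: "s \<in> basisV d" "t \<in> basisV d" "M s t \<noteq> 0" "w t \<noteq> 0" by (rule appV_nz)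
  have "nf t = m" using w st(4) unfolding hom_def by blast
  thus "s \<in> basisV d \<and> nf s = Suc m" using M[OF st(1,2,3)] st(1) by simp
qed

lemma appV_down: assumes M: "\<And>s t. s \<in> basisV d \<Longrightarrow> t \<in> basisV d \<Longrightarrow> M s t \<noteq> 0 \<Longrightarrow> Suc (nf s) = nf t"
  and w: "hom d m w" and nz: "appV d M w s \<noteq> 0" shows "s \<in> basisV d \<and> Suc (nf s) = m"
proof -
  from nz obtain t where st: "s \<in> basisV d" "t \<in> basisV d" "M s t \<noteq> 0" "w t \<noteq> 0" by (rule appV_nz)
  have "nf t = m" using w st(4) unfolding hom_def by blast
  thus "s \<in> basisV d \<and> Suc (nf s) = m" using M[OF st(1,2,3)] st(1) by simp
qed

lemma appV_down_hom: assumes M: "\<And>s t. s \<in> basisV d \<Longrightarrow> t \<in> basisV d \<Longrightarrow> M s t \<noteq> 0 \<Longrightarrow> Suc (nf s) = nf t"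
  and w: "hom d m w" shows "hom d (m - 1) (appV d M w)"
  unfolding hom_def
proof (intro allI impI)
  fix s assume "appV d M w s \<noteq> 0"
  from appV_down[OF M w this] show "s \<in> basisV d \<and> nf s = m - 1" by (metis diff_Suc_1)
qed

lemma appV_down0: assumes M: "\<And>s t. s \<in> basisV d \<Longrightarrow> t \<in> basisV d \<Longrightarrow> M s t \<noteq> 0 \<Longrightarrow> Suc (nf s) = nf t"
  and w: "hom d 0 w" shows "appV d M w = (\<lambda>s. 0)"
proof (rule ext)
  fix s show "appV d M w s = 0"
  proof (rule ccontr)
    assume "appV d M w s \<noteq> 0"
    from appV_down[OF M w this] show False by simp
  qed
qed

lemma appV_diag: assumes M: "\<And>s t. s \<in> basisV d \<Longrightarrow> t \<in> basisV d \<Longrightarrow> M s t = (if s = t then h (nf s) else 0)"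
  and w: "hom d m w" shows "appV d M w = (\<lambda>s. h m * w s)"
proof (rule ext)
  fix s
  show "appV d M w s = h m * w s"
  proof (cases "s \<in> basisV d")
    case True
    have "(\<Sum>t\<in>basisV d. M s t * w t) = (\<Sum>t\<in>basisV d. if s = t then h (nf s) * w t else 0)"
      by (rule sum.cong) (auto simp: M True)
    also have "\<dots> = h (nf s) * w s" using True by simp
    also have "\<dots> = h m * w s" using w by (cases "w s = 0") (auto simp: hom_def)
    finally show ?thesis using True by (simp add: appV_def)
  next
    case False
    hence "w s = 0" using w unfolding hom_def by blast
    thus ?thesis using False by (simp add: appV_def)
  qed
qed



lemma pow_scal: "(appV d M ^^ n) (\<lambda>s. c * w s) = (\<lambda>s. c * (appV d M ^^ n) w s)"
  by (induction n) (auto simp: appV_scal)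

lemma lam_comp: "foldr (\<lambda>a b c. a (b c)) xs (\<lambda>a. a) = foldr (\<circ>) xs id"
  by (induction xs) (auto simp: fun_eq_iff)

lemma fold_fix: "(\<forall>f\<in>set fs. f z = z) \<Longrightarrow> foldr (\<circ>) fs id z = z"
  by (induction fs) auto

lemma comp_cons: "foldr (\<circ>) (x # xs) id y = x (foldr (\<circ>) xs id y)" by simp
lemma comp_snoc: "foldr (\<circ>) (xs @ [x]) id = foldr (\<circ>) xs id \<circ> x"
  by (induction xs) auto

context
  fixes d :: nat and q :: "'a::field" and \<alpha> :: "nat \<Rightarrow> 'a" and u v us vs a0 b0 c0 a1 b1 c1 :: 'a
  assumes q: "q \<noteq> 0"
begin

lemma R_hom: "hom d m w \<Longrightarrow> hom d (Suc m) (appV d (R_op d q \<alpha> u v) w)"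
  by (rule appV_up) (use R_shift[OF q] in blast)

lemma L_hom: "hom d m w \<Longrightarrow> hom d (m - 1) (appV d (L_op d q \<alpha> us vs) w)"
  by (rule appV_down_hom) (use L_shift[OF q] in blast)

lemma L_zero: "hom d 0 w \<Longrightarrow> appV d (L_op d q \<alpha> us vs) w = (\<lambda>s. 0)"
  by (rule appV_down0) (use L_shift[OF q] in blast)

lemma Rpow_hom: "hom d m w \<Longrightarrow> hom d (m + n) ((appV d (R_op d q \<alpha> u v) ^^ n) w)"
  by (induction n) (auto intro: R_hom)

lemma Lpow_hom: "hom d m w \<Longrightarrow> hom d (m - n) ((appV d (L_op d q \<alpha> us vs) ^^ n) w)"
proof (induction n)
  case 0 thus ?case by simp
next
  case (Suc n)
  hence "hom d (m - n - 1) (appV d (L_op d q \<alpha> us vs) ((appV d (L_op d q \<alpha> us vs) ^^ n) w))"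
    by (intro L_hom) simp
  thus ?case by (simp add: diff_Suc)
qed

lemma K0_app: "hom d m w \<Longrightarrow> appV d (V_K0 d q) w = (\<lambda>s. q powi (2 * int m - int d) * w s)"
  by (rule appV_diag[where h="\<lambda>n. q powi (2 * int n - int d)"]) (auto simp: K0_entry[OF q])

lemma K1_app: "hom d m w \<Longrightarrow> appV d (V_K1 d q) w = (\<lambda>s. q powi (int d - 2 * int m) * w s)"
  by (rule appV_diag[where h="\<lambda>n. q powi (int d - 2 * int n)"]) (auto simp: K1_entry[OF q])

lemma As_app: "hom d m w \<Longrightarrow> appV d (As_op d q \<alpha> a1 b1 c1 us vs) w
   = (\<lambda>s. theta a1 b1 c1 q d m * w s + appV d (L_op d q \<alpha> us vs) w s)"
  unfolding As_op_def appV_add appV_smult appV_id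
  by (simp add: hom_restr K0_app K1_app theta_def algebra_simps)

lemma A_app: "hom d m w \<Longrightarrow> appV d (A_op d q \<alpha> a0 b0 c0 u v) w
   = (\<lambda>s. theta a0 b0 c0 q d m * w s + appV d (R_op d q \<alpha> u v) w s)"
  unfolding A_op_def appV_add appV_smult appV_id
  by (simp add: hom_restr K0_app K1_app theta_def algebra_simps)

lemma facAs: "hom d m w \<Longrightarrow> fac d (As_op d q \<alpha> a1 b1 c1 us vs) cf th w
   = (\<lambda>s. cf * ((theta a1 b1 c1 q d m - th) * w s + appV d (L_op d q \<alpha> us vs) w s))"
  unfolding fac_def by (simp add: hom_restr As_app algebra_simps)

lemma facA: "hom d m w \<Longrightarrow> fac d (A_op d q \<alpha> a0 b0 c0 u v) cf th w
   = (\<lambda>s. cf * ((theta a0 b0 c0 q d m - th) * w s + appV d (R_op d q \<alpha> u v) w s))"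
  unfolding fac_def by (simp add: hom_restr A_app algebra_simps)

lemma E1: "hom d m w \<Longrightarrow>
  foldr (\<circ>) (map (\<lambda>j. fac d (As_op d q \<alpha> a1 b1 c1 us vs) (cf j) (theta a1 b1 c1 q d j)) [1..<m+1]) id w
   = (\<lambda>s. (\<Prod>j\<in>{1..m}. cf j) * (appV d (L_op d q \<alpha> us vs) ^^ m) w s)"
proof (induction m arbitrary: w)
  case 0 thus ?case by simp
next
  case (Suc m)
  let ?L = "appV d (L_op d q \<alpha> us vs)"
  let ?f = "\<lambda>j. fac d (As_op d q \<alpha> a1 b1 c1 us vs) (cf j) (theta a1 b1 c1 q d j)"
  have up: "[1..<Suc m + 1] = [1..<m+1] @ [Suc m]" by simp
  have f1: "?f (Suc m) w = (\<lambda>s. cf (Suc m) * ?L w s)"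
    using facAs[OF Suc.prems] by simp
  have h: "hom d m (\<lambda>s. cf (Suc m) * ?L w s)"
    using hom_scal[OF L_hom[OF Suc.prems]] by simp
  have "foldr (\<circ>) (map ?f [1..<Suc m + 1]) id w = foldr (\<circ>) (map ?f [1..<m+1]) id (?f (Suc m) w)"
    unfolding up map_append list.map comp_snoc by (simp only: comp_apply)
  also have "\<dots> = (\<lambda>s. (\<Prod>j\<in>{1..m}. cf j) * (?L ^^ m) (\<lambda>s. cf (Suc m) * ?L w s) s)"
    unfolding f1 by (rule Suc.IH[OF h])
  also have "\<dots> = (\<lambda>s. (\<Prod>j\<in>{1..Suc m}. cf j) * (?L ^^ Suc m) w s)"
    by (simp add: pow_scal funpow_swap1 prod.cl_ivl_Suc mult.assoc)
  finally show ?case .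
qed

lemma E2: "hom d 0 z \<Longrightarrow> (\<forall>j\<in>set js. cf j * (theta a1 b1 c1 q d 0 - theta a1 b1 c1 q d j) = 1) \<Longrightarrow>
  foldr (\<circ>) (map (\<lambda>j. fac d (As_op d q \<alpha> a1 b1 c1 us vs) (cf j) (theta a1 b1 c1 q d j)) js) id z = z"
proof -
  assume z: "hom d 0 z" and c: "\<forall>j\<in>set js. cf j * (theta a1 b1 c1 q d 0 - theta a1 b1 c1 q d j) = 1"
  show ?thesis
  proof (rule fold_fix, intro ballI)
    fix f assume "f \<in> set (map (\<lambda>j. fac d (As_op d q \<alpha> a1 b1 c1 us vs) (cf j) (theta a1 b1 c1 q d j)) js)"
    then obtain j where j: "j \<in> set js" "f = fac d (As_op d q \<alpha> a1 b1 c1 us vs) (cf j) (theta a1 b1 c1 q d j)"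
      by auto
    show "f z = z" using c j z by (simp add: facAs L_zero fun_eq_iff mult.assoc[symmetric])
  qed
qed

lemma E3:
  assumes w: "hom d m w" and m: "m \<le> d"
    and inj: "\<And>j. 1 \<le> j \<Longrightarrow> j \<le> d \<Longrightarrow> theta a1 b1 c1 q d 0 \<noteq> theta a1 b1 c1 q d j"
  shows "appV d (E0s_op d q \<alpha> a1 b1 c1 us vs) w
     = (\<lambda>s. (\<Prod>j\<in>{1..m}. inverse (theta a1 b1 c1 q d 0 - theta a1 b1 c1 q d j))
            * (appV d (L_op d q \<alpha> us vs) ^^ m) w s)"
proof -
  let ?th = "theta a1 b1 c1 q d"
  let ?cf = "\<lambda>j. inverse (?th 0 - ?th j)"
  let ?f = "\<lambda>j. fac d (As_op d q \<alpha> a1 b1 c1 us vs) (?cf j) (?th j)"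
  have "appV d (E0s_op d q \<alpha> a1 b1 c1 us vs) w = foldr (\<circ>) (map ?f [1..<d+1]) id w"
    unfolding E0s_op_def appV_op_prod hom_restr[OF w] by (simp add: appV_fac o_def)
  also have "[1..<d+1] = [1..<m+1] @ [m+1..<d+1]"
    using upt_add_eq_append[of 1 "m+1" "d - m"] m by simp
  also have "foldr (\<circ>) (map ?f ([1..<m+1] @ [m+1..<d+1])) id
     = foldr (\<circ>) (map ?f [m+1..<d+1]) id \<circ> foldr (\<circ>) (map ?f [1..<m+1]) id"
    unfolding map_append comp_append by (rule comm_list) (auto simp: fac_commute')
  also have "(foldr (\<circ>) (map ?f [m+1..<d+1]) id \<circ> foldr (\<circ>) (map ?f [1..<m+1]) id) w
     = foldr (\<circ>) (map ?f [m+1..<d+1]) id (\<lambda>s. (\<Prod>j\<in>{1..m}. ?cf j) * (appV d (L_op d q \<alpha> us vs) ^^ m) w s)"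
    using E1[OF w, of ?cf] by simp
  also have "\<dots> = (\<lambda>s. (\<Prod>j\<in>{1..m}. ?cf j) * (appV d (L_op d q \<alpha> us vs) ^^ m) w s)"
  proof (rule E2)
    show "hom d 0 (\<lambda>s. (\<Prod>j\<in>{1..m}. ?cf j) * (appV d (L_op d q \<alpha> us vs) ^^ m) w s)"
      using hom_scal[OF Lpow_hom[OF w, of m]] by simp
    show "\<forall>j\<in>set [m+1..<d+1]. ?cf j * (?th 0 - ?th j) = 1"
      using inj by auto
  qed
  finally show ?thesis .
qed

lemma T1: "hom d 0 w \<Longrightarrow> foldr (\<circ>) (map (\<lambda>h. fac d (A_op d q \<alpha> a0 b0 c0 u v) 1 (theta a0 b0 c0 q d h)) [0..<i]) id w
   = (appV d (R_op d q \<alpha> u v) ^^ i) w"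
proof (induction i)
  case 0 thus ?case by simp
next
  case (Suc i)
  let ?g = "\<lambda>h. fac d (A_op d q \<alpha> a0 b0 c0 u v) 1 (theta a0 b0 c0 q d h)"
  let ?R = "appV d (R_op d q \<alpha> u v)"
  have hi: "hom d i ((?R ^^ i) w)"
    using Rpow_hom[OF Suc.prems, of i] by simp
  have "foldr (\<circ>) (map ?g [0..<Suc i]) id = foldr (\<circ>) (map ?g [0..<i]) id \<circ> ?g i"
    by (simp only: upt_Suc_append[OF le0] map_append list.map comp_snoc)
  also have "\<dots> = ?g i \<circ> foldr (\<circ>) (map ?g [0..<i]) id"
    by (rule comm_one[symmetric]) (auto simp: fac_commute')
  finally have c: "foldr (\<circ>) (map ?g [0..<Suc i]) id = ?g i \<circ> foldr (\<circ>) (map ?g [0..<i]) id" .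
  have "foldr (\<circ>) (map ?g [0..<Suc i]) id w = ?g i (foldr (\<circ>) (map ?g [0..<i]) id w)"
    by (simp only: c comp_apply)
  also have "\<dots> = ?g i ((?R ^^ i) w)"
    by (simp only: Suc.IH[OF Suc.prems])
  also have "\<dots> = (?R ^^ Suc i) w"
    by (simp add: facA[OF hi])
  finally show ?case .
qed

end



lemma col: "s \<in> basisV d \<Longrightarrow> t \<in> basisV d \<Longrightarrow> M s t = appV d M (ev t) s"
proof -
  assume s: "s \<in> basisV d" and t: "t \<in> basisV d"
  have "(\<Sum>u\<in>basisV d. M s u * ev t u) = (\<Sum>u\<in>basisV d. if u = t then M s u else 0)"
    by (rule sum.cong) (auto simp: ev_def)
  also have "\<dots> = M s t" using t by simp
  finally show ?thesis using s by (simp add: appV_def)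
qed

theorem lemma9p10:
  fixes q a b c as bs cs u v us vs :: "'a::field" and \<alpha> :: "nat \<Rightarrow> 'a" and d i :: nat
  assumes alg_closed: "\<forall>p :: 'a poly. degree p \<ge> 1 \<longrightarrow> (\<exists>x. poly p x = 0)"
    and "q \<noteq> 0" and "b \<noteq> 0" and "c \<noteq> 0" and "bs \<noteq> 0" and "cs \<noteq> 0"
    and "q^2 \<noteq> 1" and "q^2 \<noteq> -1"
    and "inj_on (theta a b c q d) {0..d}"
    and "inj_on (theta as bs cs q d) {0..d}"
    and "\<forall>k<d. \<alpha> k \<noteq> 0"
    and "u * vs = - b * bs * inverse q * (q - inverse q)^2"
    and "v * us = - c * cs * inverse q * (q - inverse q)^2"
    and "i \<le> d"
  shows "op_eq d
     (op_mul d (E0s_op d q \<alpha> as bs cs us vs)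
        (op_mul d (tau_op d (theta a b c q d) (A_op d q \<alpha> a b c u v) i) (E0s_op d q \<alpha> as bs cs us vs)))
     (op_smult (zeta d q \<alpha> u v us vs i /
                (\<Prod>h\<in>{1..i}. theta as bs cs q d 0 - theta as bs cs q d h))
        (E0s_op d q \<alpha> as bs cs us vs))"
proof -
  let ?B = "basisV d"
  let ?E = "E0s_op d q \<alpha> as bs cs us vs"
  let ?Tau = "tau_op d (theta a b c q d) (A_op d q \<alpha> a b c u v) i"
  let ?Lf = "appV d (L_op d q \<alpha> us vs)"
  let ?Rf = "appV d (R_op d q \<alpha> u v)"
  let ?th = "theta as bs cs q d"
  let ?kap = "\<lambda>n. \<Prod>j\<in>{1..n}. inverse (?th 0 - ?th j)"
  let ?e0 = "ev (x0 d) :: bool list \<Rightarrow> 'a"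
  have q: "q \<noteq> 0" by fact
  have inj: "\<And>j. 1 \<le> j \<Longrightarrow> j \<le> d \<Longrightarrow> ?th 0 \<noteq> ?th j"
    using assms(10) unfolding inj_on_def by (metis atLeastAtMost_iff le0 not_one_le_zero)
  have he0: "hom d 0 ?e0" using hom_ev[OF x0_basis, of d] by simp
  have tau0: "foldr (\<circ>) (map (\<lambda>h. fac d (A_op d q \<alpha> a b c u v) 1 (theta a b c q d h)) [0..<i]) id ?e0
      = (?Rf ^^ i) ?e0" by (rule T1[OF q he0])
  have tau: "appV d ?Tau ?e0 = (?Rf ^^ i) ?e0"
    unfolding tau_op_def appV_op_prod hom_restr[OF he0]
    using tau0 by (simp add: appV_fac1 o_def)
  define W where "W = (?Lf ^^ i) ((?Rf ^^ i) ?e0)"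
  have "hom d (0 + i) ((?Rf ^^ i) ?e0)" by (rule Rpow_hom[OF q he0])
  hence hRi: "hom d i ((?Rf ^^ i) ?e0)" by simp
  have "hom d (i - i) W" unfolding W_def by (rule Lpow_hom[OF q hRi])
  hence hW: "hom d 0 W" by simp
  have W0: "W = (\<lambda>s. W (x0 d) * ?e0 s)" by (rule hom0[OF hW])
  have zeta: "zeta d q \<alpha> u v us vs i = W (x0 d)"
    unfolding zeta_def
  proof (rule the_equality)
    have ent: "op_mul d (op_pow d (L_op d q \<alpha> us vs) i) (op_pow d (R_op d q \<alpha> u v) i) s (x0 d) = W s"
      if "s \<in> ?B" for s
      using col[OF that x0_basis, of "op_mul d (op_pow d (L_op d q \<alpha> us vs) i) (op_pow d (R_op d q \<alpha> u v) i)"]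
        hom_restr[OF he0] hom_restr[OF hRi]
      by (simp add: appV_mul appV_op_pow W_def)
    show "\<forall>s\<in>?B. op_mul d (op_pow d (L_op d q \<alpha> us vs) i) (op_pow d (R_op d q \<alpha> u v) i) s (x0 d)
        = (if s = x0 d then W (x0 d) else 0)"
    proof
      fix s assume s: "s \<in> ?B"
      have "W s = W (x0 d) * ?e0 s" by (rule fun_cong[OF W0])
      thus "op_mul d (op_pow d (L_op d q \<alpha> us vs) i) (op_pow d (R_op d q \<alpha> u v) i) s (x0 d)
        = (if s = x0 d then W (x0 d) else 0)" using ent[OF s] by (simp add: ev_def)
    qed
    fix z assume "\<forall>s\<in>?B. op_mul d (op_pow d (L_op d q \<alpha> us vs) i) (op_pow d (R_op d q \<alpha> u v) i) s (x0 d)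
        = (if s = x0 d then z else 0)"
    thus "z = W (x0 d)" using ent[OF x0_basis] by auto
  qed
  have kap: "?kap i = inverse (\<Prod>h\<in>{1..i}. ?th 0 - ?th h)"
    using prod_inversef[of "\<lambda>j. ?th 0 - ?th j" "{1..i}"] by (simp add: o_def)
  have ERi: "appV d ?E ((?Rf ^^ i) ?e0) = (\<lambda>s. ?kap i * W s)"
    unfolding W_def by (rule E3[OF q hRi \<open>i \<le> d\<close> inj])
  show ?thesis
    unfolding op_eq_def
  proof (intro ballI)
    fix s t assume s: "s \<in> ?B" and t: "t \<in> ?B"
    have ht: "hom d (nf t) (ev t)" by (rule hom_ev[OF t])
    have nt: "nf t \<le> d" using nf_le[of t] t by (simp add: basisV_def)
    define Z where "Z = (?Lf ^^ nf t) (ev t)"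
    have "hom d (nf t - nf t) Z" unfolding Z_def by (rule Lpow_hom[OF q ht])
    hence hZ: "hom d 0 Z" by simp
    have Et: "appV d ?E (ev t) = (\<lambda>x. (?kap (nf t) * Z (x0 d)) * ?e0 x)"
    proof -
      have "appV d ?E (ev t) = (\<lambda>x. ?kap (nf t) * Z x)"
        unfolding Z_def by (rule E3[OF q ht nt inj])
      also have "\<dots> = (\<lambda>x. (?kap (nf t) * Z (x0 d)) * ?e0 x)"
        by (subst hom0[OF hZ]) (simp add: mult.assoc)
      finally show ?thesis .
    qed
    define C where "C = ?kap (nf t) * Z (x0 d)"
    have "op_mul d ?E (op_mul d ?Tau ?E) s t = appV d ?E (appV d ?Tau (appV d ?E (ev t))) s"
      unfolding col[OF s t, of "op_mul d ?E (op_mul d ?Tau ?E)"] appV_mul by (rule refl)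
    also have "\<dots> = C * (?kap i * W s)"
      unfolding Et C_def[symmetric] appV_scal tau appV_scal ERi ..
    also have "\<dots> = C * (?kap i * (W (x0 d) * ?e0 s))"
      by (simp only: fun_cong[OF W0, of s])
    also have "\<dots> = op_smult (zeta d q \<alpha> u v us vs i / (\<Prod>h\<in>{1..i}. ?th 0 - ?th h)) ?E s t"
      unfolding op_smult_def col[OF s t, of ?E] Et C_def[symmetric] zeta kap
      by (simp add: divide_inverse mult_ac)
    finally show "op_mul d ?E (op_mul d ?Tau ?E) s t
       = op_smult (zeta d q \<alpha> u v us vs i / (\<Prod>h\<in>{1..i}. ?th 0 - ?th h)) ?E s t" .
  qed
qed

end
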